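(* Let $\mathbb{F}$ be a field, $A\in\mathbb{F}^{k\times n}$ a matrix of rank $k$, $W$ the row space of $A$, and $M=M(A)$. For every $u\in\mathbb{F}^k$ there exists $v\in\mathbb{F}^n$ such that $M/u=M/^\bullet v$, and conversely, for every $v\in\mathbb{F}^n$ there exists $u\in\mathbb{F}^k$ such that $M/u=M/^\bullet v$.
   Context: Both matroids are on the ground set $\{1,\dots,n\}$ indexing the columns of $A$. $M/u$ is the matroid in which a set of columns $\{c_1,\dots,c_\ell\}$ of $A$ is dependent iff there exist $\alpha_1,\dots,\alpha_\ell\in\mathbb{F}$, not all $0$, with $\sum_i\alpha_ic_i\in\mathrm{span}(u)$. For a subspace $U\subseteq\mathbb{F}^n$, $M(U)$ is the column matroid of a matrix whose rows form a basis of $U$, and $M/^\bullet v:=M(W\cap\mathrm{span}(v)^\perp)$, where $\mathrm{span}(v)^\perp=\{x\in\mathbb{F}^n:\sum_ix_iv_i=0\}$. *)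

theory Defs
  imports Main
begin

text \<open>A k x n matrix over a field is a function A :: nat => nat => 'a,
  with rows indexed by i < k and columns by j < n (0-based); entries outside are irrelevant.
  Vectors of F^m are functions nat => 'a whose coordinates < m are relevant.
  The ground set of all matroids is {0..<n} (column indices).
  A matroid on {0..<n} is represented by its dependence predicate on subsets.\<close>

definition rows_independent :: "(nat \<Rightarrow> nat \<Rightarrow> 'a::field) \<Rightarrow> nat \<Rightarrow> nat \<Rightarrow> bool" where
  "rows_independent A k n \<longleftrightarrow>
     (\<forall>c. (\<forall>j<n. (\<Sum>i<k. c i * A i j) = 0) \<longrightarrow> (\<forall>i<k. c i = 0))"

definition row_space :: "(nat \<Rightarrow> nat \<Rightarrow> 'a::field) \<Rightarrow> nat \<Rightarrow> nat \<Rightarrow> (nat \<Rightarrow> 'a) set" where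
  "row_space A k n = {x. (\<forall>j. n \<le> j \<longrightarrow> x j = 0) \<and>
                         (\<exists>c. \<forall>j<n. x j = (\<Sum>i<k. c i * A i j))}"

definition perp :: "nat \<Rightarrow> (nat \<Rightarrow> 'a::field) \<Rightarrow> (nat \<Rightarrow> 'a) set" where
  "perp n v = {x. (\<forall>j. n \<le> j \<longrightarrow> x j = 0) \<and> (\<Sum>j<n. x j * v j) = 0}"

definition col_dep :: "(nat \<Rightarrow> nat \<Rightarrow> 'a::field) \<Rightarrow> nat \<Rightarrow> nat set \<Rightarrow> bool" where
  "col_dep B r S \<longleftrightarrow>
     (\<exists>\<alpha>. (\<exists>j\<in>S. \<alpha> j \<noteq> 0) \<and> (\<forall>i<r. (\<Sum>j\<in>S. \<alpha> j * B i j) = 0))"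

definition basis_matrix :: "nat \<Rightarrow> (nat \<Rightarrow> 'a::field) set \<Rightarrow> nat \<Rightarrow> (nat \<Rightarrow> nat \<Rightarrow> 'a) \<Rightarrow> bool" where
  "basis_matrix n U r B \<longleftrightarrow> rows_independent B r n \<and> row_space B r n = U"

definition subspace_matroid_dep :: "nat \<Rightarrow> (nat \<Rightarrow> 'a::field) set \<Rightarrow> nat set \<Rightarrow> bool" where
  "subspace_matroid_dep n U =
     (let (r, B) = (SOME (r, B). basis_matrix n U r B) in col_dep B r)"

definition contr_dep :: "(nat \<Rightarrow> nat \<Rightarrow> 'a::field) \<Rightarrow> nat \<Rightarrow> (nat \<Rightarrow> 'a) \<Rightarrow> nat set \<Rightarrow> bool" where
  "contr_dep A k u S \<longleftrightarrow>
     (\<exists>\<alpha>. (\<exists>j\<in>S. \<alpha> j \<noteq> 0) \<and>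
          (\<exists>t. \<forall>i<k. (\<Sum>j\<in>S. \<alpha> j * A i j) = t * u i))"

definition bullet_contr_dep :: "(nat \<Rightarrow> nat \<Rightarrow> 'a::field) \<Rightarrow> nat \<Rightarrow> nat \<Rightarrow> (nat \<Rightarrow> 'a) \<Rightarrow> nat set \<Rightarrow> bool" where
  "bullet_contr_dep A k n v = subspace_matroid_dep n (row_space A k n \<inter> perp n v)"

definition same_matroid :: "nat \<Rightarrow> (nat set \<Rightarrow> bool) \<Rightarrow> (nat set \<Rightarrow> bool) \<Rightarrow> bool" where
  "same_matroid n D1 D2 \<longleftrightarrow> (\<forall>S. S \<subseteq> {0..<n} \<longrightarrow> (D1 S \<longleftrightarrow> D2 S))"

end

theory Submission
  imports Defs
begin

lemma rs_char:
  "x \<in> row_space B r n \<longleftrightarrow> (\<exists>c. x = (\<lambda>j. if j < n then (\<Sum>i<r. c i * B i j) else 0))"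
  unfolding row_space_def by (auto simp: fun_eq_iff)

lemma sum_split_sigma:
  fixes f :: "nat \<Rightarrow> 'b::comm_monoid_add"
  assumes "i0 < k"
  shows "(\<Sum>i<k. f i) = (\<Sum>m<k-1. f (if m = i0 then k-1 else m)) + f i0"
proof -
  define p where "p i = (if i = i0 then k-1 else if i = k-1 then i0 else i)" for i
  have bij: "bij_betw p {..<k} {..<k}"
    by (rule bij_betw_byWitness[where f'=p]) (use assms in \<open>auto simp: p_def\<close>)
  have "(\<Sum>i<k. f i) = (\<Sum>i<k. f (p i))" using sum.reindex_bij_betw[OF bij, of f] by simp
  also have "\<dots> = (\<Sum>m<Suc (k-1). f (p m))" using assms by simp
  also have "\<dots> = (\<Sum>m<k-1. f (p m)) + f (p (k-1))" by simp
  also have "(\<Sum>m<k-1. f (p m)) = (\<Sum>m<k-1. f (if m = i0 then k-1 else m))"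
    by (rule sum.cong) (auto simp: p_def)
  also have "p (k-1) = i0" by (simp add: p_def)
  finally show ?thesis .
qed

lemma sum_two_delta:
  fixes f :: "nat \<Rightarrow> 'a::field"
  assumes "i < k" "i0 < k" "i \<noteq> i0"
  shows "(\<Sum>l<k. (if l = i then a else if l = i0 then b else 0) * f l) = a * f i + b * f i0"
proof -
  have "(\<Sum>l<k. (if l = i then a else if l = i0 then b else 0) * f l)
      = (\<Sum>l<k. (if l = i then a * f l else 0) + (if l = i0 then b * f l else 0))"
    by (rule sum.cong) (use assms in auto)
  also have "\<dots> = a * f i + b * f i0" using assms by (simp add: sum.distrib)
  finally show ?thesis .
qed

lemma sum_delta_mult:
  fixes f :: "nat \<Rightarrow> 'a::field"
  assumes "i < k"
  shows "(\<Sum>l<k. (if l = i then 1 else 0) * f l) = f i"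
proof -
  have "(\<Sum>l<k. (if l = i then 1 else 0) * f l) = (\<Sum>l<k. (if l = i then f l else 0))"
    by (rule sum.cong) auto
  then show ?thesis using assms by simp
qed

lemma span_char:
  fixes u y :: "nat \<Rightarrow> 'a::field"
  shows "(\<forall>c. (\<Sum>i<k. c i * u i) = 0 \<longrightarrow> (\<Sum>i<k. c i * y i) = 0) \<longleftrightarrow> (\<exists>t. \<forall>i<k. y i = t * u i)"
proof
  assume H: "\<forall>c. (\<Sum>i<k. c i * u i) = 0 \<longrightarrow> (\<Sum>i<k. c i * y i) = 0"
  show "\<exists>t. \<forall>i<k. y i = t * u i"
  proof (cases "\<forall>i<k. u i = 0")
    case True
    have "y i = 0" if "i < k" for i
    proof -
      have "(\<Sum>l<k. (if l = i then 1 else 0) * u l) = 0" using True that sum_delta_mult[OF that, of u] by simp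
      then have "(\<Sum>l<k. (if l = i then 1 else 0) * y l) = 0" using H[rule_format, of "\<lambda>l. if l = i then 1 else 0"] by blast
      then show ?thesis using sum_delta_mult[OF that, of y] by simp
    qed
    then show ?thesis using True by (intro exI[of _ 0]) auto
  next
    case False
    then obtain i0 where i0: "i0 < k" "u i0 \<noteq> 0" by auto
    have "y i = (y i0 / u i0) * u i" if "i < k" for i
    proof (cases "i = i0")
      case True then show ?thesis using i0 by simp
    next
      case ne: False
      let ?c = "\<lambda>l. if l = i then u i0 else if l = i0 then - u i else 0"
      have "(\<Sum>l<k. ?c l * u l) = u i0 * u i + (- u i) * u i0"
        by (rule sum_two_delta[OF that i0(1) ne])
      then have "(\<Sum>l<k. ?c l * u l) = 0" by (simp add: algebra_simps)
      then have "(\<Sum>l<k. ?c l * y l) = 0" using H[rule_format, of ?c] by blast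
      then have "u i0 * y i + (- u i) * y i0 = 0"
        using sum_two_delta[OF that i0(1) ne, of "u i0" "- u i" y] by simp
      then show ?thesis using i0(2) by (simp add: field_simps)
    qed
    then show ?thesis by blast
  qed
next
  assume "\<exists>t. \<forall>i<k. y i = t * u i"
  then obtain t where t: "\<forall>i<k. y i = t * u i" by blast
  show "\<forall>c. (\<Sum>i<k. c i * u i) = 0 \<longrightarrow> (\<Sum>i<k. c i * y i) = 0"
  proof (intro allI impI)
    fix c :: "nat \<Rightarrow> 'a" assume "(\<Sum>i<k. c i * u i) = 0"
    then have "t * (\<Sum>i<k. c i * u i) = 0" by simp
    then show "(\<Sum>i<k. c i * y i) = 0" using t
      by (simp add: sum_distrib_left algebra_simps)
  qed
qed


lemma col_dep_char:
  fixes B :: "nat \<Rightarrow> nat \<Rightarrow> 'a::field"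
  assumes "S \<subseteq> {..<n}"
  shows "col_dep B r S \<longleftrightarrow> (\<exists>\<alpha>. (\<exists>j\<in>S. \<alpha> j \<noteq> 0) \<and> (\<forall>x\<in>row_space B r n. (\<Sum>j\<in>S. \<alpha> j * x j) = 0))"
proof
  assume "col_dep B r S"
  then obtain \<alpha> where a1: "\<exists>j\<in>S. \<alpha> j \<noteq> 0" and a2: "\<forall>i<r. (\<Sum>j\<in>S. \<alpha> j * B i j) = 0"
    unfolding col_dep_def by blast
  have "(\<Sum>j\<in>S. \<alpha> j * x j) = 0" if "x \<in> row_space B r n" for x
  proof -
    from that[unfolded rs_char] obtain c where c: "x = (\<lambda>j. if j < n then (\<Sum>i<r. c i * B i j) else 0)" by blast
    have "(\<Sum>j\<in>S. \<alpha> j * x j) = (\<Sum>j\<in>S. \<alpha> j * (\<Sum>i<r. c i * B i j))"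
      by (rule sum.cong) (use assms c in auto)
    also have "\<dots> = (\<Sum>i<r. c i * (\<Sum>j\<in>S. \<alpha> j * B i j))"
      by (simp add: sum_distrib_left sum.swap[of _ S] algebra_simps)
    also have "\<dots> = 0" using a2 by simp
    finally show ?thesis .
  qed
  then show "\<exists>\<alpha>. (\<exists>j\<in>S. \<alpha> j \<noteq> 0) \<and> (\<forall>x\<in>row_space B r n. (\<Sum>j\<in>S. \<alpha> j * x j) = 0)"
    using a1 by blast
next
  assume "\<exists>\<alpha>. (\<exists>j\<in>S. \<alpha> j \<noteq> 0) \<and> (\<forall>x\<in>row_space B r n. (\<Sum>j\<in>S. \<alpha> j * x j) = 0)"
  then obtain \<alpha> where a1: "\<exists>j\<in>S. \<alpha> j \<noteq> 0" and a2: "\<forall>x\<in>row_space B r n. (\<Sum>j\<in>S. \<alpha> j * x j) = 0"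
    by blast
  have "(\<Sum>j\<in>S. \<alpha> j * B i j) = 0" if "i < r" for i
  proof -
    let ?x = "\<lambda>j. if j < n then (\<Sum>l<r. (if l = i then 1 else 0) * B l j) else 0"
    have x_in: "?x \<in> row_space B r n" unfolding rs_char by (rule exI[of _ "\<lambda>l. if l = i then 1 else 0"]) (rule refl)
    have "(\<Sum>j\<in>S. \<alpha> j * ?x j) = 0" using x_in by (rule bspec[OF a2])
    moreover have "(\<Sum>j\<in>S. \<alpha> j * ?x j) = (\<Sum>j\<in>S. \<alpha> j * B i j)"
    proof -
      have d: "(\<Sum>l<r. (if l = i then 1 else 0) * B l j) = B i j" for j
        by (rule sum_delta_mult[OF that])
      show ?thesis by (rule sum.cong) (use assms d in auto)
    qed
    ultimately show ?thesis by simp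
  qed
  then show "col_dep B r S" unfolding col_dep_def using a1 by blast
qed

lemma smd_char:
  fixes B :: "nat \<Rightarrow> nat \<Rightarrow> 'a::field"
  assumes "basis_matrix n U r B" "S \<subseteq> {..<n}"
  shows "subspace_matroid_dep n U S \<longleftrightarrow> (\<exists>\<alpha>. (\<exists>j\<in>S. \<alpha> j \<noteq> 0) \<and> (\<forall>x\<in>U. (\<Sum>j\<in>S. \<alpha> j * x j) = 0))"
proof -
  obtain r' B' where eq: "(SOME (r, B). basis_matrix n U r B) = (r', B')"
    by (cases "SOME (r, B). basis_matrix n U r B") auto
  have "basis_matrix n U r' B'"
    using someI[of "\<lambda>(r,B). basis_matrix n U r B" "(r,B)"] assms(1) eq by auto
  then have "row_space B' r' n = U" by (simp add: basis_matrix_def)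
  moreover have "subspace_matroid_dep n U S = col_dep B' r' S"
    by (simp add: subspace_matroid_dep_def eq)
  ultimately show ?thesis using col_dep_char[OF assms(2), of B' r'] by simp
qed

lemma U_char:
  fixes A :: "nat \<Rightarrow> nat \<Rightarrow> 'a::field"
  assumes "\<forall>i<k. u i = (\<Sum>j<n. A i j * v j)"
  shows "x \<in> row_space A k n \<inter> perp n v \<longleftrightarrow>
    (\<exists>c. (\<Sum>i<k. c i * u i) = 0 \<and> x = (\<lambda>j. if j < n then (\<Sum>i<k. c i * A i j) else 0))"
proof -
  have key: "(\<Sum>j<n. (\<Sum>i<k. c i * A i j) * v j) = (\<Sum>i<k. c i * u i)" for c
  proof -
    have "(\<Sum>j<n. (\<Sum>i<k. c i * A i j) * v j) = (\<Sum>i<k. c i * (\<Sum>j<n. A i j * v j))"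
      by (simp add: sum_distrib_left sum_distrib_right sum.swap[of _ "{..<n}"] algebra_simps)
    also have "\<dots> = (\<Sum>i<k. c i * u i)" using assms by simp
    finally show ?thesis .
  qed
  have key2: "(\<Sum>j<n. (if j < n then (\<Sum>i<k. c i * A i j) else 0) * v j) = (\<Sum>i<k. c i * u i)" for c
    using key[of c] by simp
  show ?thesis
  proof
    assume x: "x \<in> row_space A k n \<inter> perp n v"
    then obtain c where c: "x = (\<lambda>j. if j < n then (\<Sum>i<k. c i * A i j) else 0)"
      using rs_char[of x A k n] by auto
    have "(\<Sum>j<n. x j * v j) = 0" using x by (simp add: perp_def)
    then have "(\<Sum>i<k. c i * u i) = 0" using key2[of c] c by simp
    then show "\<exists>c. (\<Sum>i<k. c i * u i) = 0 \<and> x = (\<lambda>j. if j < n then (\<Sum>i<k. c i * A i j) else 0)"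
      using c by blast
  next
    assume "\<exists>c. (\<Sum>i<k. c i * u i) = 0 \<and> x = (\<lambda>j. if j < n then (\<Sum>i<k. c i * A i j) else 0)"
    then obtain c where c1: "(\<Sum>i<k. c i * u i) = 0" and c: "x = (\<lambda>j. if j < n then (\<Sum>i<k. c i * A i j) else 0)"
      by blast
    have "x \<in> row_space A k n" unfolding rs_char using c by blast
    moreover have "(\<Sum>j<n. x j * v j) = 0" using c c1 key2[of c] by simp
    then have "x \<in> perp n v" using c by (simp add: perp_def)
    ultimately show "x \<in> row_space A k n \<inter> perp n v" by blast
  qed
qed



lemma ri_apply:
  "rows_independent A k n \<Longrightarrow> \<forall>j<n. (\<Sum>i<k. c i * A i j) = 0 \<Longrightarrow> i < k \<Longrightarrow> c i = 0"
  unfolding rows_independent_def by blast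

lemma surj_rows:
  fixes A :: "nat \<Rightarrow> nat \<Rightarrow> 'a::field"
  assumes "rows_independent A k n"
  shows "\<exists>v. \<forall>i<k. (\<Sum>j<n. A i j * v j) = u i"
using assms proof (induction k arbitrary: A u)
  case 0 then show ?case by simp
next
  case (Suc k)
  have "\<exists>j0<n. A k j0 \<noteq> 0"
  proof (rule ccontr)
    assume "\<not> (\<exists>j0<n. A k j0 \<noteq> 0)"
    then have z: "\<forall>j<n. A k j = 0" by auto
    let ?c = "\<lambda>i. if i = k then (1::'a) else 0"
    have "\<forall>j<n. (\<Sum>i<Suc k. ?c i * A i j) = 0" using z by simp
    then have "?c k = 0" using ri_apply[OF Suc.prems, of ?c k] by blast
    then show False by simp
  qed
  then obtain j0 where j0: "j0 < n" "A k j0 \<noteq> 0" by auto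
  define A' where "A' i j = A i j - (A i j0 / A k j0) * A k j" for i j
  have ind': "rows_independent A' k n"
    unfolding rows_independent_def
  proof (rule allI, rule impI)
    fix c assume H: "\<forall>j<n. (\<Sum>i<k. c i * A' i j) = 0"
    define c' where "c' i = (if i = k then - (\<Sum>i<k. c i * A i j0) / A k j0 else c i)" for i
    have "(\<Sum>i<Suc k. c' i * A i j) = (\<Sum>i<k. c i * A' i j)" for j
    proof -
      have "(\<Sum>i<k. c i * A' i j) = (\<Sum>i<k. c i * A i j) - (\<Sum>i<k. c i * A i j0) / A k j0 * A k j"
        by (simp add: A'_def right_diff_distrib sum_subtractf sum_distrib_right sum_divide_distrib mult.assoc)
      moreover have "(\<Sum>i<k. c' i * A i j) = (\<Sum>i<k. c i * A i j)"
        by (rule sum.cong) (auto simp: c'_def)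
      ultimately show ?thesis by (simp add: c'_def)
    qed
    then have "\<forall>j<n. (\<Sum>i<Suc k. c' i * A i j) = 0" using H by simp
    then have a: "\<forall>i<Suc k. c' i = 0" using ri_apply[OF Suc.prems, of c'] by blast
    show "\<forall>i<k. c i = 0"
    proof (intro allI impI)
      fix i assume i: "i < k"
      then have "c' i = 0" using a by simp
      then show "c i = 0" using i by (simp add: c'_def)
    qed
  qed
  define u' where "u' i = u i - (A i j0 / A k j0) * u k" for i
  obtain v' where v': "\<forall>i<k. (\<Sum>j<n. A' i j * v' j) = u' i" using Suc.IH[OF ind'] by blast
  define t where "t = (u k - (\<Sum>j<n. A k j * v' j)) / A k j0"
  define v where "v j = v' j + (if j = j0 then t else 0)" for j
  have upd: "(\<Sum>j<n. f j * v j) = (\<Sum>j<n. f j * v' j) + f j0 * t" for f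
  proof -
    have "(\<Sum>j<n. f j * v j) = (\<Sum>j<n. f j * v' j + (if j = j0 then f j * t else 0))"
      by (rule sum.cong) (auto simp: v_def algebra_simps)
    also have "\<dots> = (\<Sum>j<n. f j * v' j) + f j0 * t" using j0 by (simp add: sum.distrib)
    finally show ?thesis .
  qed
  have rowk: "(\<Sum>j<n. A k j * v j) = u k" using upd[of "A k"] j0 by (simp add: t_def)
  have rowi: "(\<Sum>j<n. A i j * v j) = u i" if "i < k" for i
  proof -
    have z: "A' i j0 = 0" using j0 by (simp add: A'_def)
    have "(\<Sum>j<n. A i j * v j) = (\<Sum>j<n. A' i j * v j + (A i j0 / A k j0) * (A k j * v j))"
      by (rule sum.cong) (auto simp: A'_def algebra_simps)
    also have "\<dots> = (\<Sum>j<n. A' i j * v j) + (A i j0 / A k j0) * (\<Sum>j<n. A k j * v j)"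
      by (simp add: sum.distrib sum_distrib_left)
    also have "(\<Sum>j<n. A' i j * v j) = u' i" using upd[of "A' i"] z v' that by simp
    finally show ?thesis using rowk by (simp add: u'_def)
  qed
  show ?case
  proof (intro exI allI impI)
    fix i assume "i < Suc k"
    then show "(\<Sum>j<n. A i j * v j) = u i" using rowi rowk by (cases "i = k") auto
  qed
qed


lemma basis_exists:
  fixes A :: "nat \<Rightarrow> nat \<Rightarrow> 'a::field"
  assumes ind: "rows_independent A k n" and uv: "\<forall>i<k. u i = (\<Sum>j<n. A i j * v j)"
  shows "\<exists>r B. basis_matrix n (row_space A k n \<inter> perp n v) r B"
proof (cases "\<forall>i<k. u i = 0")
  case True
  have "row_space A k n \<inter> perp n v = row_space A k n"
  proof (intro set_eqI iffI)
    fix x assume "x \<in> row_space A k n \<inter> perp n v" then show "x \<in> row_space A k n" by blast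
  next
    fix x assume "x \<in> row_space A k n"
    then obtain c where c: "x = (\<lambda>j. if j < n then (\<Sum>i<k. c i * A i j) else 0)"
      using rs_char[of x A k n] by auto
    have "(\<Sum>i<k. c i * u i) = 0" using True by simp
    then show "x \<in> row_space A k n \<inter> perp n v" using U_char[OF uv, of x] c by blast
  qed
  then show ?thesis using ind unfolding basis_matrix_def by blast
next
  case False
  then obtain i0 where i0: "i0 < k" "u i0 \<noteq> 0" by auto
  define \<sigma> where "\<sigma> m = (if m = i0 then k-1 else m)" for m
  define p where "p i = (if i = i0 then k-1 else if i = k-1 then i0 else i)" for i
  define B where "B m j = A (\<sigma> m) j - (u (\<sigma> m) / u i0) * A i0 j" for m j
  have split: "(\<Sum>i<k. f i) = (\<Sum>m<k-1. f (\<sigma> m)) + f i0" for f :: "nat \<Rightarrow> 'a"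
    using sum_split_sigma[OF i0(1), of f] by (simp add: \<sigma>_def)
  have lin: "(\<Sum>m<k-1. d m * B m j) = (\<Sum>m<k-1. d m * A (\<sigma> m) j) - (\<Sum>m<k-1. d m * u (\<sigma> m)) / u i0 * A i0 j" for d j
    by (simp add: B_def right_diff_distrib sum_subtractf sum_distrib_right sum_divide_distrib mult.assoc)
  have sp: "\<sigma> m \<noteq> i0 \<and> p (\<sigma> m) = m" if "m < k-1" for m
    using that i0 by (auto simp: \<sigma>_def p_def)
  define cof where "cof d i = (if i = i0 then - (\<Sum>m<k-1. d m * u (\<sigma> m)) / u i0 else d (p i))" for d i
  have cofs: "cof d (\<sigma> m) = d m" if "m < k-1" for d m
    using sp[OF that] by (simp add: cof_def)
  have comb: "(\<Sum>i<k. cof d i * A i j) = (\<Sum>m<k-1. d m * B m j)" for d j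
  proof -
    have "(\<Sum>i<k. cof d i * A i j) = (\<Sum>m<k-1. cof d (\<sigma> m) * A (\<sigma> m) j) + cof d i0 * A i0 j"
      by (rule split)
    also have "(\<Sum>m<k-1. cof d (\<sigma> m) * A (\<sigma> m) j) = (\<Sum>m<k-1. d m * A (\<sigma> m) j)"
      by (rule sum.cong) (auto simp: cofs)
    finally show ?thesis using lin[of d j] by (simp add: cof_def)
  qed
  have cofu: "(\<Sum>i<k. cof d i * u i) = 0" for d
  proof -
    have "(\<Sum>i<k. cof d i * u i) = (\<Sum>m<k-1. cof d (\<sigma> m) * u (\<sigma> m)) + cof d i0 * u i0"
      by (rule split)
    also have "(\<Sum>m<k-1. cof d (\<sigma> m) * u (\<sigma> m)) = (\<Sum>m<k-1. d m * u (\<sigma> m))"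
      by (rule sum.cong) (auto simp: cofs)
    finally show ?thesis using i0(2) by (simp add: cof_def)
  qed
  have indB: "rows_independent B (k-1) n"
    unfolding rows_independent_def
  proof (rule allI, rule impI)
    fix d assume H: "\<forall>j<n. (\<Sum>m<k-1. d m * B m j) = 0"
    then have H2: "\<forall>j<n. (\<Sum>i<k. cof d i * A i j) = 0" using comb by simp
    show "\<forall>m<k-1. d m = 0"
    proof (intro allI impI)
      fix m assume m: "m < k-1"
      have "\<sigma> m < k" using m i0 by (auto simp: \<sigma>_def)
      then have "cof d (\<sigma> m) = 0" using ri_apply[OF ind H2] by blast
      then show "d m = 0" using cofs[OF m] by simp
    qed
  qed
  have rsB: "row_space B (k-1) n = row_space A k n \<inter> perp n v"
  proof (intro set_eqI iffI)
    fix x assume "x \<in> row_space B (k-1) n"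
    then obtain d where d: "x = (\<lambda>j. if j < n then (\<Sum>m<k-1. d m * B m j) else 0)"
      using rs_char[of x B "k-1" n] by auto
    then have "x = (\<lambda>j. if j < n then (\<Sum>i<k. cof d i * A i j) else 0)" by (simp only: comb)
    then show "x \<in> row_space A k n \<inter> perp n v" using U_char[OF uv, of x] cofu[of d] by blast
  next
    fix x assume "x \<in> row_space A k n \<inter> perp n v"
    then obtain c where c1: "(\<Sum>i<k. c i * u i) = 0" and c: "x = (\<lambda>j. if j < n then (\<Sum>i<k. c i * A i j) else 0)"
      using U_char[OF uv, of x] by blast
    have e: "(\<Sum>m<k-1. c (\<sigma> m) * u (\<sigma> m)) = - c i0 * u i0"
      using split[of "\<lambda>i. c i * u i"] c1 by (simp add: eq_neg_iff_add_eq_0)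
    have cb: "(\<Sum>m<k-1. c (\<sigma> m) * B m j) = (\<Sum>i<k. c i * A i j)" for j
      using lin[of "\<lambda>m. c (\<sigma> m)" j] split[of "\<lambda>i. c i * A i j"] e i0(2) by simp
    have "x = (\<lambda>j. if j < n then (\<Sum>m<k-1. c (\<sigma> m) * B m j) else 0)" unfolding cb by (rule c)
    then show "x \<in> row_space B (k-1) n" unfolding rs_char by (rule exI[of _ "\<lambda>m. c (\<sigma> m)"])
  qed
  show ?thesis using indB rsB unfolding basis_matrix_def by blast
qed

lemma main_eq:
  fixes A :: "nat \<Rightarrow> nat \<Rightarrow> 'a::field"
  assumes ind: "rows_independent A k n" and uv: "\<forall>i<k. u i = (\<Sum>j<n. A i j * v j)"
  shows "same_matroid n (contr_dep A k u) (bullet_contr_dep A k n v)"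
  unfolding same_matroid_def
proof (intro allI impI)
  fix S assume "S \<subseteq> {0..<n}"
  then have S: "S \<subseteq> {..<n}" by auto
  obtain r B where bm: "basis_matrix n (row_space A k n \<inter> perp n v) r B"
    using basis_exists[OF ind uv] by blast
  have eq1: "bullet_contr_dep A k n v S \<longleftrightarrow> (\<exists>\<alpha>. (\<exists>j\<in>S. \<alpha> j \<noteq> 0) \<and>
      (\<forall>x\<in>row_space A k n \<inter> perp n v. (\<Sum>j\<in>S. \<alpha> j * x j) = 0))"
    unfolding bullet_contr_dep_def by (rule smd_char[OF bm S])
  have eq2: "(\<forall>x\<in>row_space A k n \<inter> perp n v. (\<Sum>j\<in>S. \<alpha> j * x j) = 0) \<longleftrightarrow>
     (\<exists>t. \<forall>i<k. (\<Sum>j\<in>S. \<alpha> j * A i j) = t * u i)" for \<alpha>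
  proof -
    have sw: "(\<Sum>j\<in>S. \<alpha> j * (if j < n then (\<Sum>i<k. c i * A i j) else 0)) = (\<Sum>i<k. c i * (\<Sum>j\<in>S. \<alpha> j * A i j))" for c
    proof -
      have "(\<Sum>j\<in>S. \<alpha> j * (if j < n then (\<Sum>i<k. c i * A i j) else 0)) = (\<Sum>j\<in>S. \<alpha> j * (\<Sum>i<k. c i * A i j))"
        by (rule sum.cong) (use S in auto)
      also have "\<dots> = (\<Sum>i<k. c i * (\<Sum>j\<in>S. \<alpha> j * A i j))"
        by (simp add: sum_distrib_left sum.swap[of _ S] algebra_simps)
      finally show ?thesis .
    qed
    have "(\<forall>x\<in>row_space A k n \<inter> perp n v. (\<Sum>j\<in>S. \<alpha> j * x j) = 0) \<longleftrightarrow>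
       (\<forall>c. (\<Sum>i<k. c i * u i) = 0 \<longrightarrow> (\<Sum>i<k. c i * (\<Sum>j\<in>S. \<alpha> j * A i j)) = 0)"
    proof
      assume H: "\<forall>x\<in>row_space A k n \<inter> perp n v. (\<Sum>j\<in>S. \<alpha> j * x j) = 0"
      show "\<forall>c. (\<Sum>i<k. c i * u i) = 0 \<longrightarrow> (\<Sum>i<k. c i * (\<Sum>j\<in>S. \<alpha> j * A i j)) = 0"
      proof (intro allI impI)
        fix c :: "nat \<Rightarrow> 'a" assume c: "(\<Sum>i<k. c i * u i) = 0"
        let ?x = "\<lambda>j. if j < n then (\<Sum>i<k. c i * A i j) else 0"
        have "?x \<in> row_space A k n \<inter> perp n v" using U_char[OF uv, of ?x] c by blast
        then have "(\<Sum>j\<in>S. \<alpha> j * ?x j) = 0" by (rule bspec[OF H])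
        then show "(\<Sum>i<k. c i * (\<Sum>j\<in>S. \<alpha> j * A i j)) = 0" using sw[of c] by simp
      qed
    next
      assume H: "\<forall>c. (\<Sum>i<k. c i * u i) = 0 \<longrightarrow> (\<Sum>i<k. c i * (\<Sum>j\<in>S. \<alpha> j * A i j)) = 0"
      show "\<forall>x\<in>row_space A k n \<inter> perp n v. (\<Sum>j\<in>S. \<alpha> j * x j) = 0"
      proof
        fix x assume "x \<in> row_space A k n \<inter> perp n v"
        then obtain c where c1: "(\<Sum>i<k. c i * u i) = 0" and c: "x = (\<lambda>j. if j < n then (\<Sum>i<k. c i * A i j) else 0)"
          using U_char[OF uv, of x] by blast
        have "(\<Sum>i<k. c i * (\<Sum>j\<in>S. \<alpha> j * A i j)) = 0" using H c1 by blast
        then show "(\<Sum>j\<in>S. \<alpha> j * x j) = 0" using sw[of c] c by simp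
      qed
    qed
    also have "\<dots> \<longleftrightarrow> (\<exists>t. \<forall>i<k. (\<Sum>j\<in>S. \<alpha> j * A i j) = t * u i)"
      by (rule span_char)
    finally show ?thesis .
  qed
  show "contr_dep A k u S \<longleftrightarrow> bullet_contr_dep A k n v S"
    unfolding eq1 contr_dep_def using eq2 by blast
qed

theorem lemma19:
  fixes A :: "nat \<Rightarrow> nat \<Rightarrow> 'a::field" and k n :: nat
  assumes "rows_independent A k n"
  shows "(\<forall>u. \<exists>v. same_matroid n (contr_dep A k u) (bullet_contr_dep A k n v)) \<and>
         (\<forall>v. \<exists>u. same_matroid n (contr_dep A k u) (bullet_contr_dep A k n v))"
proof (intro conjI allI)
  fix u :: "nat \<Rightarrow> 'a"
  obtain v where "\<forall>i<k. (\<Sum>j<n. A i j * v j) = u i" using surj_rows[OF assms] by blast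
  then have "\<forall>i<k. u i = (\<Sum>j<n. A i j * v j)" by simp
  then show "\<exists>v. same_matroid n (contr_dep A k u) (bullet_contr_dep A k n v)"
    using main_eq[OF assms] by blast
next
  fix v :: "nat \<Rightarrow> 'a"
  have "same_matroid n (contr_dep A k (\<lambda>i. \<Sum>j<n. A i j * v j)) (bullet_contr_dep A k n v)"
    by (rule main_eq[OF assms]) simp
  then show "\<exists>u. same_matroid n (contr_dep A k u) (bullet_contr_dep A k n v)" by blast
qed

end
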